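(* Let $n\ge3$, $k\ge0$. If $S\subseteq\mathrm{Inc}(A,B)$ is a maximal independent set of $G_n^k$ which is not reversible, then $S$ contains a strict alternating cycle of size $3$.
   Context: For integers $n\ge3$, $k\ge0$, the crown $S_n^k$ is the poset with ground set $A\cup B$, $A=\{a_1,\dots,a_{n+k}\}$, $B=\{b_1,\dots,b_{n+k}\}$, indices cyclic modulo $n+k$; elements of $A$ are pairwise incomparable, as are elements of $B$, and $a_i$ is incomparable to $b_j$ when $j\in\{i,\dots,i+k\}$ (mod $n+k$), while $a_i<b_j$ otherwise. $\mathrm{Inc}(A,B)$ is the set of pairs $(a,b)\in A\times B$ with $a$ incomparable to $b$; $G_n^k$ has vertex set $\mathrm{Inc}(A,B)$ with $(a,b)$ adjacent to $(x,y)$ iff $a<y$ and $x<b$. A set $R\subseteq\mathrm{Inc}(A,B)$ is reversible if some linear extension $L$ of $S_n^k$ has $b<a$ in $L$ for all $(a,b)\in R$. An indexed set $\{(x_\alpha,y_\alpha):\alpha\in[m]\}\subseteq\mathrm{Inc}(A,B)$ is an alternating cycle of size $m$ if $x_\alpha\le y_{\alpha-1}$ for all $\alpha$ (indices cyclic mod $m$); it is strict if $x_\alpha\le y_\beta$ holds iff $\beta=\alpha-1$. *)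

theory Defs
  imports Main
begin

(* Elements of the crown S_n^k: A i stands for a_i, B j for b_j,
   with indices taken in {0..<n+k} (cyclic modulo n+k). *)
datatype elem = A nat | B nat

definition ground :: "nat \<Rightarrow> nat \<Rightarrow> elem set" where
  "ground n k = {A i | i. i < n + k} \<union> {B j | j. j < n + k}"

(* a_i is incomparable to b_j iff j \<in> {i, ..., i+k} (mod n+k) *)
definition incomp_idx :: "nat \<Rightarrow> nat \<Rightarrow> nat \<Rightarrow> nat \<Rightarrow> bool" where
  "incomp_idx n k i j \<longleftrightarrow> (j + (n + k) - i) mod (n + k) \<le> k"

definition crown_less :: "nat \<Rightarrow> nat \<Rightarrow> elem \<Rightarrow> elem \<Rightarrow> bool" where
  "crown_less n k x y \<longleftrightarrow>
     (\<exists>i j. x = A i \<and> y = B j \<and> i < n + k \<and> j < n + k \<and> \<not> incomp_idx n k i j)"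

definition crown_le :: "nat \<Rightarrow> nat \<Rightarrow> elem \<Rightarrow> elem \<Rightarrow> bool" where
  "crown_le n k x y \<longleftrightarrow> (x = y \<and> x \<in> ground n k) \<or> crown_less n k x y"

definition Inc :: "nat \<Rightarrow> nat \<Rightarrow> (elem \<times> elem) set" where
  "Inc n k = {(A i, B j) | i j. i < n + k \<and> j < n + k \<and> incomp_idx n k i j}"

definition G_adj :: "nat \<Rightarrow> nat \<Rightarrow> elem \<times> elem \<Rightarrow> elem \<times> elem \<Rightarrow> bool" where
  "G_adj n k p q \<longleftrightarrow> p \<in> Inc n k \<and> q \<in> Inc n k \<and>
     crown_less n k (fst p) (snd q) \<and> crown_less n k (fst q) (snd p)"

definition independent :: "nat \<Rightarrow> nat \<Rightarrow> (elem \<times> elem) set \<Rightarrow> bool" where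
  "independent n k S \<longleftrightarrow> S \<subseteq> Inc n k \<and> (\<forall>p\<in>S. \<forall>q\<in>S. \<not> G_adj n k p q)"

definition maximal_independent :: "nat \<Rightarrow> nat \<Rightarrow> (elem \<times> elem) set \<Rightarrow> bool" where
  "maximal_independent n k S \<longleftrightarrow> independent n k S \<and>
     (\<forall>T. independent n k T \<and> S \<subseteq> T \<longrightarrow> T = S)"

definition linear_extension :: "nat \<Rightarrow> nat \<Rightarrow> elem rel \<Rightarrow> bool" where
  "linear_extension n k L \<longleftrightarrow> L \<subseteq> ground n k \<times> ground n k \<and>
     linear_order_on (ground n k) L \<and>
     (\<forall>x y. crown_le n k x y \<longrightarrow> (x, y) \<in> L)"

definition reversible :: "nat \<Rightarrow> nat \<Rightarrow> (elem \<times> elem) set \<Rightarrow> bool" where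
  "reversible n k R \<longleftrightarrow> R \<subseteq> Inc n k \<and>
     (\<exists>L. linear_extension n k L \<and> (\<forall>(a, b)\<in>R. (b, a) \<in> L \<and> b \<noteq> a))"

(* indexed family c 0, ..., c (m-1) of pairs in Inc(A,B); indices cyclic mod m *)
definition alternating_cycle :: "nat \<Rightarrow> nat \<Rightarrow> nat \<Rightarrow> (nat \<Rightarrow> elem \<times> elem) \<Rightarrow> bool" where
  "alternating_cycle n k m c \<longleftrightarrow> 0 < m \<and> inj_on c {0..<m} \<and>
     (\<forall>\<alpha><m. c \<alpha> \<in> Inc n k) \<and>
     (\<forall>\<alpha><m. crown_le n k (fst (c \<alpha>)) (snd (c ((\<alpha> + m - 1) mod m))))"

definition strict_alternating_cycle :: "nat \<Rightarrow> nat \<Rightarrow> nat \<Rightarrow> (nat \<Rightarrow> elem \<times> elem) \<Rightarrow> bool" where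
  "strict_alternating_cycle n k m c \<longleftrightarrow> alternating_cycle n k m c \<and>
     (\<forall>\<alpha><m. \<forall>\<beta><m. crown_le n k (fst (c \<alpha>)) (snd (c \<beta>)) \<longleftrightarrow> \<beta> = (\<alpha> + m - 1) mod m)"

end

theory Submission
  imports Defs
begin

lemma cl_D: "crown_less n k x y \<Longrightarrow> \<exists>i j. x = A i \<and> y = B j \<and> i < n + k \<and> j < n + k"
  unfolding crown_less_def by auto

lemma cl_A2[simp]: "\<not> crown_less n k x (A i)"
  unfolding crown_less_def by auto

lemma cl_B1[simp]: "\<not> crown_less n k (B j) y"
  unfolding crown_less_def by auto

lemma Inc_D: "p \<in> Inc n k \<Longrightarrow> \<exists>i j. p = (A i, B j) \<and> i < n + k \<and> j < n + k \<and> incomp_idx n k i j"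
  unfolding Inc_def by auto

lemma Inc_nl: "p \<in> Inc n k \<Longrightarrow> \<not> crown_less n k (fst p) (snd p)"
  unfolding Inc_def crown_less_def by auto

lemma Inc_I: "\<not> crown_less n k (A i) (B j) \<Longrightarrow> i < n + k \<Longrightarrow> j < n + k \<Longrightarrow> (A i, B j) \<in> Inc n k"
  unfolding Inc_def crown_less_def by auto

definition Fr :: "nat \<Rightarrow> nat \<Rightarrow> (elem \<times> elem) set \<Rightarrow> ((elem \<times> elem) \<times> (elem \<times> elem)) set" where
  "Fr n k S = {(p, q). p \<in> S \<and> q \<in> S \<and> crown_less n k (fst p) (snd q)}"

definition Er :: "nat \<Rightarrow> nat \<Rightarrow> (elem \<times> elem) set \<Rightarrow> elem rel" where
  "Er n k S = {(x, y). crown_less n k x y} \<union> {(snd p, fst p) | p. p \<in> S}"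

lemma Er_inv:
  assumes "(u, v) \<in> (Er n k S)\<^sup>+" and "S \<subseteq> Inc n k"
  shows "crown_less n k u v \<or> (\<exists>p q. p \<in> S \<and> q \<in> S \<and> (p, q) \<in> (Fr n k S)\<^sup>* \<and>
     (u = snd p \<or> crown_less n k u (snd p)) \<and> (v = fst q \<or> crown_less n k (fst q) v))"
  using assms(1)
proof (induction rule: trancl_induct)
  case (base y)
  then consider "crown_less n k u y" | p where "p \<in> S" "u = snd p" "y = fst p"
    unfolding Er_def by blast
  then show ?case
  proof cases
    case 1 then show ?thesis by blast
  next
    case 2 then show ?thesis by blast
  qed
next
  case (step y z)
  from step.hyps(2) consider "crown_less n k y z" | p where "p \<in> S" "y = snd p" "z = fst p"
    unfolding Er_def by auto
  then show ?case
  proof cases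
    case 1
    then obtain i where yA: "y = A i" using cl_D by blast
    from step.IH show ?thesis
    proof
      assume "crown_less n k u y" then show ?thesis using yA by simp
    next
      assume "\<exists>p q. p \<in> S \<and> q \<in> S \<and> (p, q) \<in> (Fr n k S)\<^sup>* \<and>
         (u = snd p \<or> crown_less n k u (snd p)) \<and> (y = fst q \<or> crown_less n k (fst q) y)"
      then obtain p q where pq: "p \<in> S" "q \<in> S" "(p, q) \<in> (Fr n k S)\<^sup>*"
        "u = snd p \<or> crown_less n k u (snd p)" "y = fst q \<or> crown_less n k (fst q) y" by blast
      have "y = fst q" using pq(5) yA by auto
      then show ?thesis using pq 1 by blast
    qed
  next
    case 2
    note r = 2
    from r(1) assms(2) obtain i j where rr: "p = (A i, B j)" using Inc_D by blast
    from step.IH show ?thesis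
    proof
      assume "crown_less n k u y" then show ?thesis
        apply - apply (rule disjI2) apply (rule exI[of _ p], rule exI[of _ p]) using r by simp
    next
      assume "\<exists>p q. p \<in> S \<and> q \<in> S \<and> (p, q) \<in> (Fr n k S)\<^sup>* \<and>
         (u = snd p \<or> crown_less n k u (snd p)) \<and> (y = fst q \<or> crown_less n k (fst q) y)"
      then obtain p' q where pq: "p' \<in> S" "q \<in> S" "(p', q) \<in> (Fr n k S)\<^sup>*"
        "u = snd p' \<or> crown_less n k u (snd p')" "y = fst q \<or> crown_less n k (fst q) y" by blast
      from pq(2) assms(2) obtain i' j' where qq: "q = (A i', B j')" using Inc_D by blast
      have "crown_less n k (fst q) (snd p)" using pq(5) qq rr r by auto
      then have "(q, p) \<in> Fr n k S" using pq(2) r(1) unfolding Fr_def by auto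
      then have pp: "(p', p) \<in> (Fr n k S)\<^sup>*" using pq(3) by (simp add: rtrancl_into_rtrancl)
      show ?thesis apply (rule disjI2) apply (rule exI[of _ p'], rule exI[of _ p]) using pq(1,4) r(1,3) pp by simp
    qed
  qed
qed

lemma Er_acyclic:
  assumes "S \<subseteq> Inc n k" and "\<forall>p\<in>S. (p, p) \<notin> (Fr n k S)\<^sup>+"
  shows "(x, x) \<notin> (Er n k S)\<^sup>+"
proof
  assume "(x, x) \<in> (Er n k S)\<^sup>+"
  from Er_inv[OF this assms(1)] show False
  proof
    assume "crown_less n k x x" then show False by (cases x) simp_all
  next
    assume "\<exists>p q. p \<in> S \<and> q \<in> S \<and> (p, q) \<in> (Fr n k S)\<^sup>* \<and>
     (x = snd p \<or> crown_less n k x (snd p)) \<and> (x = fst q \<or> crown_less n k (fst q) x)"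
    then obtain p q where pq: "p \<in> S" "q \<in> S" "(p, q) \<in> (Fr n k S)\<^sup>*"
        "x = snd p \<or> crown_less n k x (snd p)" "x = fst q \<or> crown_less n k (fst q) x" by blast
    from pq(1) assms(1) obtain i j where pp: "p = (A i, B j)" using Inc_D by blast
    from pq(2) assms(1) obtain i' j' where qq: "q = (A i', B j')" using Inc_D by blast
    have "crown_less n k (fst q) (snd p)" using pq(4,5) pp qq by (cases x) auto
    then have "(q, p) \<in> Fr n k S" using pq(1,2) unfolding Fr_def by auto
    then have "(p, p) \<in> (Fr n k S)\<^sup>+" using pq(3) by (meson rtrancl_into_trancl1)
    then show False using assms(2) pq(1) by blast
  qed
qed

lemma ground_fin: "finite (ground n k)"
proof -
  have "ground n k = A ` {..<n+k} \<union> B ` {..<n+k}" unfolding ground_def by auto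
  then show ?thesis by simp
qed

lemma cl_ground: "crown_less n k x y \<Longrightarrow> x \<in> ground n k \<and> y \<in> ground n k"
  unfolding crown_less_def ground_def by auto

lemma Inc_ground: "p \<in> Inc n k \<Longrightarrow> fst p \<in> ground n k \<and> snd p \<in> ground n k"
  unfolding Inc_def ground_def by auto

definition enc :: "elem \<Rightarrow> nat" where
  "enc x = (case x of A i \<Rightarrow> 2 * i | B j \<Rightarrow> Suc (2 * j))"

lemma enc_inj: "enc x = enc y \<Longrightarrow> x = y"
  unfolding enc_def by (cases x; cases y) (auto, presburger+)

lemma rev_from_acyclic:
  assumes SI: "S \<subseteq> Inc n k" and ac: "\<forall>p\<in>S. (p, p) \<notin> (Fr n k S)\<^sup>+"
  shows "reversible n k S"
proof -
  define E where "E = Er n k S"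
  have Esub: "E \<subseteq> ground n k \<times> ground n k"
    unfolding E_def Er_def using cl_ground Inc_ground SI by blast
  have Etsub: "E\<^sup>+ \<subseteq> ground n k \<times> ground n k"
    using Esub by (rule trancl_subset_Sigma)
  have acE: "(x, x) \<notin> E\<^sup>+" for x unfolding E_def using Er_acyclic[OF SI ac] .
  define r where "r x = card {z. (z, x) \<in> E\<^sup>+}" for x
  have rlt: "r x < r y" if xy: "(x, y) \<in> E\<^sup>+" for x y
  proof -
    have "{z. (z, x) \<in> E\<^sup>+} \<subset> {z. (z, y) \<in> E\<^sup>+}"
    proof
      show "{z. (z, x) \<in> E\<^sup>+} \<subseteq> {z. (z, y) \<in> E\<^sup>+}" using xy by auto
      show "{z. (z, x) \<in> E\<^sup>+} \<noteq> {z. (z, y) \<in> E\<^sup>+}" using xy acE by blast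
    qed
    moreover have "finite {z. (z, y) \<in> E\<^sup>+}"
    proof (rule finite_subset[OF _ ground_fin])
      show "{z. (z, y) \<in> E\<^sup>+} \<subseteq> ground n k" using Etsub by blast
    qed
    ultimately show ?thesis unfolding r_def by (rule psubset_card_mono[rotated])
  qed
  define L where "L = {(x, y). x \<in> ground n k \<and> y \<in> ground n k \<and>
      (r x < r y \<or> (r x = r y \<and> enc x \<le> enc y))}"
  have lin: "linear_order_on (ground n k) L"
    unfolding linear_order_on_def partial_order_on_def preorder_on_def
  proof (intro conjI)
    show "L \<subseteq> ground n k \<times> ground n k" unfolding L_def by auto
    show "refl_on (ground n k) L" unfolding refl_on_def L_def by auto
    show "trans L" unfolding trans_def L_def by auto
    show "antisym L" unfolding antisym_def L_def using enc_inj by force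
    show "total_on (ground n k) L" unfolding total_on_def L_def
    proof (intro ballI impI)
      fix x y assume "x \<in> ground n k" "y \<in> ground n k" "x \<noteq> y"
      then show "(x, y) \<in> {(x, y). x \<in> ground n k \<and> y \<in> ground n k \<and> (r x < r y \<or> r x = r y \<and> enc x \<le> enc y)} \<or>
           (y, x) \<in> {(x, y). x \<in> ground n k \<and> y \<in> ground n k \<and> (r x < r y \<or> r x = r y \<and> enc x \<le> enc y)}"
        by auto
    qed
  qed
  have ext: "linear_extension n k L"
    unfolding linear_extension_def
  proof (intro conjI allI impI)
    show "L \<subseteq> ground n k \<times> ground n k" unfolding L_def by auto
    show "linear_order_on (ground n k) L" by (rule lin)
    fix x y assume "crown_le n k x y"
    then consider "x = y" "x \<in> ground n k" | "crown_less n k x y" unfolding crown_le_def by blast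
    then show "(x, y) \<in> L"
    proof cases
      case 1 then show ?thesis unfolding L_def by simp
    next
      case 2
      then have "(x, y) \<in> E\<^sup>+" unfolding E_def Er_def by auto
      then show ?thesis using rlt cl_ground[OF 2] unfolding L_def by auto
    qed
  qed
  have "\<forall>(a, b)\<in>S. (b, a) \<in> L \<and> b \<noteq> a"
  proof (intro ballI, clarify)
    fix a b assume ab: "(a, b) \<in> S"
    then have abI: "(a, b) \<in> Inc n k" using SI by blast
    then obtain i j where "a = A i" "b = B j" using Inc_D by blast
    moreover have "(b, a) \<in> E\<^sup>+" using ab unfolding E_def Er_def by force
    ultimately show "(b, a) \<in> L \<and> b \<noteq> a" using rlt Inc_ground[OF abI] unfolding L_def by auto
  qed
  then show ?thesis unfolding reversible_def using SI ext by blast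
qed

lemma all3: "(\<forall>a<(3::nat). P a) \<longleftrightarrow> P 0 \<and> P 1 \<and> P 2"
proof
  assume "\<forall>a<(3::nat). P a" then show "P 0 \<and> P 1 \<and> P 2" by simp
next
  assume h: "P 0 \<and> P 1 \<and> P 2"
  show "\<forall>a<(3::nat). P a"
  proof (intro allI impI)
    fix a :: nat assume "a < 3"
    then have "a = 0 \<or> a = 1 \<or> a = 2" by arith
    then show "P a" using h by blast
  qed
qed

lemma Inc_le: "p \<in> Inc n k \<Longrightarrow> q \<in> Inc n k \<Longrightarrow>
   crown_le n k (fst p) (snd q) \<longleftrightarrow> crown_less n k (fst p) (snd q)"
  unfolding crown_le_def Inc_def by auto

lemma maxI:
  assumes mi: "maximal_independent n k S" and t: "t \<in> Inc n k" "t \<notin> S"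
  shows "\<exists>s\<in>S. crown_less n k (fst s) (snd t) \<and> crown_less n k (fst t) (snd s)"
proof -
  have ind: "independent n k S" using mi unfolding maximal_independent_def by blast
  have "\<not> independent n k (insert t S)"
  proof
    assume "independent n k (insert t S)"
    then have "insert t S = S" using mi unfolding maximal_independent_def by blast
    then show False using t by blast
  qed
  moreover have "insert t S \<subseteq> Inc n k" using ind t unfolding independent_def by blast
  ultimately obtain p q where pq: "p \<in> insert t S" "q \<in> insert t S" "G_adj n k p q"
    unfolding independent_def by blast
  have nt: "\<not> G_adj n k t t" using Inc_nl[OF t(1)] unfolding G_adj_def by blast
  from pq consider "p = t" "q \<in> S" | "q = t" "p \<in> S" | "p \<in> S" "q \<in> S" | "p = t" "q = t" by blast
  then show ?thesis
  proof cases
    case 1 then show ?thesis using pq(3) unfolding G_adj_def by blast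
  next
    case 2 then show ?thesis using pq(3) unfolding G_adj_def by blast
  next
    case 3 then show ?thesis using pq(3) ind unfolding independent_def by blast
  next
    case 4 then show ?thesis using pq(3) nt by blast
  qed
qed

lemma cycle3:
  assumes mi: "maximal_independent n k S" and p: "(p, p) \<in> (Fr n k S)\<^sup>+"
  shows "\<exists>c. strict_alternating_cycle n k 3 c \<and> (\<forall>\<alpha><3. c \<alpha> \<in> S)"
proof -
  define F where "F = Fr n k S"
  have ind: "independent n k S" using mi unfolding maximal_independent_def by blast
  then have SI: "S \<subseteq> Inc n k" unfolding independent_def by blast
  have FD: "x \<in> S \<and> y \<in> S \<and> crown_less n k (fst x) (snd y)" if "(x, y) \<in> F" for x y
    using that unfolding F_def Fr_def by auto
  have FI: "(x, y) \<in> F" if "x \<in> S" "y \<in> S" "crown_less n k (fst x) (snd y)" for x y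
    using that unfolding F_def Fr_def by auto
  have irr: "(x, x) \<notin> F" for x using FD SI Inc_nl by blast
  have noadj: "False" if "(x, y) \<in> F" "(y, x) \<in> F" for x y
  proof -
    have "G_adj n k x y" using FD[OF that(1)] FD[OF that(2)] SI unfolding G_adj_def by blast
    then show False using ind FD[OF that(1)] unfolding independent_def by blast
  qed
  define P where "P m \<longleftrightarrow> 0 < m \<and> (\<exists>q. (q, q) \<in> F ^^ m)" for m
  have "\<exists>m. P m" using p unfolding P_def F_def trancl_power by blast
  then have Pm: "P (LEAST m. P m)" by (rule LeastI_ex)
  define m where "m = (LEAST m. P m)"
  have minm: "\<not> P m'" if "m' < m" for m' using not_less_Least that unfolding m_def by blast
  from Pm obtain d0 where m0: "0 < m" and d0: "(d0, d0) \<in> F ^^ m" unfolding P_def m_def by blast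
  have "m = 1 \<or> m = 2 \<or> m = 3 \<or> 3 < m" using m0 by arith
  then consider "m = 1" | "m = 2" | "m = 3" | "3 < m" by blast
  then show ?thesis
  proof cases
    case 1
    then show ?thesis using d0 irr by simp
  next
    case 2
    have "(d0, d0) \<in> F ^^ (Suc (Suc 0))" using d0 2 by (simp only: numeral_2_eq_2)
    then obtain y where "(d0, y) \<in> F" "(y, d0) \<in> F ^^ Suc 0"
      by (blast dest: relpow_Suc_D2)
    then have "(d0, y) \<in> F" "(y, d0) \<in> F" by simp_all
    then show ?thesis using noadj by blast
  next
    case 3
    have "(d0, d0) \<in> F ^^ (Suc (Suc (Suc 0)))" using d0 3 by (simp only: numeral_3_eq_3)
    then obtain d1 where "(d0, d1) \<in> F" "(d1, d0) \<in> F ^^ (Suc (Suc 0))"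
      by (blast dest: relpow_Suc_D2)
    moreover from this(2) obtain d2 where "(d1, d2) \<in> F" "(d2, d0) \<in> F ^^ Suc 0"
      by (blast dest: relpow_Suc_D2)
    ultimately have dd: "(d0, d1) \<in> F" "(d1, d2) \<in> F" "(d2, d0) \<in> F" by auto
    define c where "c = (\<lambda>a::nat. if a = 0 then d0 else if a = 1 then d2 else d1)"
    have S3: "d0 \<in> S" "d1 \<in> S" "d2 \<in> S" using dd FD by blast+
    then have I3: "d0 \<in> Inc n k" "d1 \<in> Inc n k" "d2 \<in> Inc n k" using SI by blast+
    have ne: "d0 \<noteq> d1" "d0 \<noteq> d2" "d1 \<noteq> d2" using dd(1) dd(3) dd(2) irr by metis+
    have T: "crown_less n k (fst d0) (snd d1)" "crown_less n k (fst d1) (snd d2)"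
      "crown_less n k (fst d2) (snd d0)" using dd FD by blast+
    have N: "\<not> crown_less n k (fst d1) (snd d0)" "\<not> crown_less n k (fst d2) (snd d1)"
      "\<not> crown_less n k (fst d0) (snd d2)" using dd noadj FI S3 by blast+
    have N2: "\<not> crown_less n k (fst d0) (snd d0)" "\<not> crown_less n k (fst d1) (snd d1)"
      "\<not> crown_less n k (fst d2) (snd d2)" using I3 Inc_nl by blast+
    have inj: "inj_on c {0..<3}"
      unfolding inj_on_def c_def using ne by (auto simp: numeral_3_eq_3 less_Suc_eq)
    have "strict_alternating_cycle n k 3 c"
      unfolding strict_alternating_cycle_def alternating_cycle_def
      using inj I3 T N N2 by (simp add: all3 c_def Inc_le)
    moreover have "\<forall>\<alpha><3. c \<alpha> \<in> S" using S3 by (simp add: all3 c_def)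
    ultimately show ?thesis by blast
  next
    case 4
    define j where "j = m - 3"
    have mj: "m = Suc (Suc (Suc j))" "0 < j" using 4 unfolding j_def by arith+
    have "(d0, d0) \<in> F ^^ (Suc (Suc (Suc j)))" using d0 mj by simp
    then obtain c1 where "(d0, c1) \<in> F" "(c1, d0) \<in> F ^^ (Suc (Suc j))"
      by (blast dest: relpow_Suc_D2)
    moreover from this(2) obtain c2 where "(c1, c2) \<in> F" "(c2, d0) \<in> F ^^ Suc j"
      by (blast dest: relpow_Suc_D2)
    moreover from this(2) obtain c3 where "(c2, c3) \<in> F" "(c3, d0) \<in> F ^^ j"
      by (blast dest: relpow_Suc_D2)
    ultimately have cc: "(d0, c1) \<in> F" "(c1, c2) \<in> F" "(c2, c3) \<in> F" "(c3, d0) \<in> F ^^ j"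
      by auto
    have S4: "d0 \<in> S" "c1 \<in> S" "c2 \<in> S" "c3 \<in> S" using cc(1-3) FD by blast+
    have False
    proof (cases "crown_less n k (fst d0) (snd c3)")
      case True
      then have "(d0, c3) \<in> F" using FI S4 by blast
      then have "(d0, d0) \<in> F ^^ Suc j" using cc(4) by (rule relpow_Suc_I2)
      then have "P (Suc j)" unfolding P_def by blast
      then show False using minm mj by simp
    next
      case False
      define t where "t = (fst d0, snd c3)"
      obtain i0 j0 where e0: "d0 = (A i0, B j0)" "i0 < n + k" using S4 SI Inc_D by blast
      obtain i3 j3 where e3: "c3 = (A i3, B j3)" "j3 < n + k" using S4 SI Inc_D by blast
      have tI: "t \<in> Inc n k" unfolding t_def using Inc_I[of n k i0 j3] False e0 e3 by simp
      show False
      proof (cases "t \<in> S")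
        case True
        have "(t, c1) \<in> F" using FI True S4 FD[OF cc(1)] unfolding t_def by auto
        moreover have "(c2, t) \<in> F" using FI True S4 FD[OF cc(3)] unfolding t_def by auto
        ultimately have "(t, t) \<in> F ^^ Suc (Suc (Suc 0))" using cc(2)
          by (meson relpow_Suc_I2 relpow_0_I)
        then have "P 3" unfolding P_def numeral_3_eq_3 by blast
        then show False using minm mj by simp
      next
        case False
        then obtain s where s: "s \<in> S" "crown_less n k (fst s) (snd t)" "crown_less n k (fst t) (snd s)"
          using maxI[OF mi tI] by blast
        have "(d0, s) \<in> F" using FI s S4 unfolding t_def by auto
        moreover have "(s, c3) \<in> F" using FI s S4 unfolding t_def by auto
        ultimately have "(d0, d0) \<in> F ^^ Suc (Suc j)" using cc(4)
          by (meson relpow_Suc_I2)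
        then have "P (Suc (Suc j))" unfolding P_def by blast
        then show False using minm mj by simp
      qed
    qed
    then show ?thesis ..
  qed
qed

theorem lemma4p5:
  fixes n k :: nat and S :: "(elem \<times> elem) set"
  assumes "n \<ge> 3"
    and "maximal_independent n k S"
    and "\<not> reversible n k S"
  shows "\<exists>c. strict_alternating_cycle n k 3 c \<and> (\<forall>\<alpha><3. c \<alpha> \<in> S)"
proof (cases "\<exists>p\<in>S. (p, p) \<in> (Fr n k S)\<^sup>+")
  case True
  then show ?thesis using cycle3[OF assms(2)] by blast
next
  case False
  have "S \<subseteq> Inc n k" using assms(2) unfolding maximal_independent_def independent_def by blast
  then have "reversible n k S" using rev_from_acyclic False by blast
  then show ?thesis using assms(3) by blast
qed

end
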